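(* In the setting below, assume $f(\cdot,\xi)$ is convex for all $\xi\in\Xi$. Then for all $N\in\mathbb N$, $$\theta^2\,\mathbb E\big[\|u_N^*-u^*\|_{\mathcal U}^{2(\varrho-1)}\big]\le \frac1N\,C_{\mathcal H;\mathcal U^*}^2\,\sigma_{\mathrm Df}^2.$$
   Context: Let $U$ be a separable Hilbert space (identified with its dual, inner product $(\cdot,\cdot)_U$), $W$ a separable Banach space with dual $W^*$, and $B:U\to W$ a compact linear operator with adjoint $B^*$. Let $\psi:U\to[0,\infty]$ be proper, closed and convex with bounded domain $\mathcal D(\psi)=\{u:\psi(u)<\infty\}$. Let $U_0\subset U$ be open, convex and bounded with $\mathcal D(\psi)\subset U_0$. Let $\Xi$ be a complete separable metric space, $\boldsymbol\xi$ a $\Xi$-valued random element, and $\boldsymbol\xi^1,\boldsymbol\xi^2,\ldots$ i.i.d. copies of $\boldsymbol\xi$ on a complete probability space $(\Omega,\mathcal F,P)$. Let $f:B(U_0)\times\Xi\to\mathbb R$ be such that $f(\cdot,\xi)$ is continuous on $B(\mathcal D(\psi))$, $f(w,\cdot)$ is measurable, and $|f(Bu,\xi)|\le \zeta_f(\xi)$ on $U_0\times\Xi$ with $\zeta_f$ integrable. Assume: for each $\xi$, $g_\xi(u)=f(Bu,\xi)$ is continuously differentiable on $U_0$; there is a Carathéodory map $\mathrm D_wf:B(\mathcal D(\psi))\times\Xi\to W^*$ with $\nabla g_\xi(u)=B^*\mathrm D_wf(Bu,\xi)$ on $\mathcal D(\psi)\times\Xi$; there is an integrable $\zeta_{\mathrm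 Df}$ with $\|\nabla g_\xi(u)\|_U\le\zeta_{\mathrm Df}(\xi)$ on $U_0\times\Xi$ and $\|\mathrm D_wf(Bu,\xi)\|_{W^*}\le\zeta_{\mathrm Df}(\xi)$ on $\mathcal D(\psi)\times\Xi$. Let $F(w)=\mathbb E[f(w,\boldsymbol\xi)]$, $\mathrm DF(w)=\mathbb E[\mathrm D_wf(w,\boldsymbol\xi)]$, $G(u)=F(Bu)+\psi(u)$, $\hat F_N(w)=\frac1N\sum_{i=1}^Nf(w,\boldsymbol\xi^i)$. Let $u^*$ be a solution of $\min_{u\in U}G(u)$ and for each $N$ let $u_N^*:\Omega\to U$ be measurable with $u_N^*(\omega)$ a solution of $\min_{u\in U}\hat F_N(Bu,\omega)+\psi(u)$. Further assume: $\mathcal U$ is a Banach space with $\mathcal U^*\hookrightarrow U\hookrightarrow\mathcal U$, $\mathcal H$ is a separable Hilbert space with $\mathcal H\hookrightarrow\mathcal U^*$ (embedding constant $C_{\mathcal H;\mathcal U^*}$), and $|(v,u)_U|\le\|v\|_{\mathcal U^*}\|u\|_{\mathcal U}$ for all $v\in\mathcal U^*$, $u\in U$; there are $\theta\in(0,\infty)$, $\varrho\in[2,\infty)$ with $(B^*\mathrm DF(Bu^* ),u-u^* )_U+\psi(u)-\psi(u^* )\ge\theta\|u-u^*\|_{\mathcal U}^{\varrho}$ for all $u\in U$; the map $\xi\mapsto\nabla g_\xi(u^* )\in\mathcal H$ is integrable and $\sigma_{\mathrm Df}=(\mathbb E[\|\nabla g_{\boldsymbol\xi}(u^* )-\mathbb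 E[\nabla g_{\boldsymbol\xi}(u^* )]\|_{\mathcal H}^2])^{1/2}<\infty$. *)

theory Defs
  imports "HOL-Analysis.Analysis" "HOL-Probability.Probability"
begin

definition compact_operator :: "('a::real_normed_vector \<Rightarrow>\<^sub>L 'b::real_normed_vector) \<Rightarrow> bool" where
  "compact_operator B \<longleftrightarrow> compact (closure (blinfun_apply B ` ball 0 1))"

definition edom :: "('a \<Rightarrow> ereal) \<Rightarrow> 'a set" where
  "edom \<psi> = {u. \<psi> u < \<infinity>}"

definition proper_fun :: "('a \<Rightarrow> ereal) \<Rightarrow> bool" where
  "proper_fun \<psi> \<longleftrightarrow> (\<forall>u. \<psi> u > -\<infinity>) \<and> (\<exists>u. \<psi> u < \<infinity>)"

definition closed_fun :: "('a::topological_space \<Rightarrow> ereal) \<Rightarrow> bool" where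
  "closed_fun \<psi> \<longleftrightarrow> closed {(u, t::real). \<psi> u \<le> ereal t}"

definition convex_fun :: "('a::real_vector \<Rightarrow> ereal) \<Rightarrow> bool" where
  "convex_fun \<psi> \<longleftrightarrow> (\<forall>x y (t::real). 0 \<le> t \<and> t \<le> 1 \<longrightarrow>
      \<psi> ((1 - t) *\<^sub>R x + t *\<^sub>R y) \<le> ereal (1 - t) * \<psi> x + ereal t * \<psi> y)"

end

theory Submission
  imports Defs
begin

lemma grad_ineq:
  fixes g :: "'a::real_normed_vector \<Rightarrow> real"
  assumes cvx: "\<And>t. 0 < t \<Longrightarrow> t < 1 \<Longrightarrow> g (a + t *\<^sub>R (b - a)) \<le> (1 - t) * g a + t * g b"
    and der: "(g has_derivative g') (at a)"
  shows "g' (b - a) \<le> g b - g a"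
proof -
  have lin: "bounded_linear g'" using der by (rule has_derivative_bounded_linear)
  have "((\<lambda>t. g (a + t *\<^sub>R (b - a))) has_derivative (\<lambda>t. g' (t *\<^sub>R (b - a)))) (at 0)"
  proof -
    have d1: "((\<lambda>t. a + t *\<^sub>R (b - a)) has_derivative (\<lambda>t. t *\<^sub>R (b - a))) (at 0)"
      by (auto intro!: derivative_eq_intros)
    have d2: "(g has_derivative g') (at (a + 0 *\<^sub>R (b - a)))" using der by simp
    show ?thesis using has_derivative_compose[OF d1 d2] by (simp add: o_def)
  qed
  hence "((\<lambda>t. g (a + t *\<^sub>R (b - a))) has_field_derivative g' (b - a)) (at 0)"
    using lin unfolding has_field_derivative_def
    by (simp add: linear_simps(5) bounded_linear.linear)
      (metis (no_types, lifting) ext mult.commute)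
  hence "((\<lambda>t. (g (a + t *\<^sub>R (b - a)) - g a) / t) \<longlongrightarrow> g' (b - a)) (at 0)"
    by (simp add: DERIV_def)
  hence lim: "((\<lambda>t. (g (a + t *\<^sub>R (b - a)) - g a) / t) \<longlongrightarrow> g' (b - a)) (at_right 0)"
    by (simp add: filterlim_at_split)
  have ev: "\<forall>\<^sub>F t in at_right 0. (g (a + t *\<^sub>R (b - a)) - g a) / t \<le> g b - g a"
  proof -
    have "\<forall>\<^sub>F t in at_right (0::real). 0 < t \<and> t < 1"
      by (simp add: eventually_at_right_field) (metis zero_less_one)
    thus ?thesis
    proof (rule eventually_mono)
      fix t :: real assume t: "0 < t \<and> t < 1"
      have "g (a + t *\<^sub>R (b - a)) - g a \<le> t * (g b - g a)" using cvx[of t] t by (simp add: algebra_simps)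
      thus "(g (a + t *\<^sub>R (b - a)) - g a) / t \<le> g b - g a" using t by (simp add: divide_le_eq mult.commute)
    qed
  qed
  show ?thesis by (rule tendsto_le[OF _ tendsto_const lim ev]) simp
qed


lemma indep_pair:
  assumes P: "prob_space M" and ind: "prob_space.indep_vars M M' X I"
    and ij: "i \<in> I" "j \<in> I" "i \<noteq> j"
  shows "prob_space.indep_var M (M' i) (X i) (M' j) (X j)"
proof -
  interpret prob_space M by (rule P)
  let ?F = "\<lambda>i. sigma_sets (space M) { X i -` A \<inter> space M | A. A \<in> sets (M' i)}"
  have rv: "\<forall>i\<in>I. random_variable (M' i) (X i)" and IS: "indep_sets ?F I"
    using ind unfolding indep_vars_def by auto
  have ev: "\<And>k. k \<in> I \<Longrightarrow> ?F k \<subseteq> events" using IS unfolding indep_sets_def by blast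
  show ?thesis
    unfolding indep_var_eq indep_sets2_eq
  proof (intro conjI ballI)
    show "random_variable (M' i) (X i)" "random_variable (M' j) (X j)" using rv ij by auto
    show "?F i \<subseteq> events" "?F j \<subseteq> events" using ev ij by auto
    fix a b assume a: "a \<in> ?F i" and b: "b \<in> ?F j"
    have "prob (\<Inter>k\<in>{i,j}. (\<lambda>k. if k = i then a else b) k) = (\<Prod>k\<in>{i,j}. prob ((\<lambda>k. if k = i then a else b) k))"
      by (rule indep_setsD[OF IS]) (use ij a b in auto)
    thus "prob (a \<inter> b) = prob a * prob b" using ij by (simp add: Int_commute)
  qed
qed


lemma var_mean:
  fixes X :: "nat \<Rightarrow> 'o \<Rightarrow> 'x::polish_space"
    and \<phi> :: "'x \<Rightarrow> 'h::{real_inner, complete_space, second_countable_topology}"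
  assumes P: "prob_space M"
    and Xm: "\<And>i. i \<ge> 1 \<Longrightarrow> X i \<in> measurable M borel"
    and ind: "prob_space.indep_vars M (\<lambda>_. borel) X {1..}"
    and Xd: "\<And>i. i \<ge> 1 \<Longrightarrow> distr M borel (X i) = \<mu>"
    and \<phi>m[measurable]: "\<phi> \<in> borel_measurable borel"
    and \<phi>int: "integrable \<mu> \<phi>" and \<phi>0: "integral\<^sup>L \<mu> \<phi> = 0"
    and \<phi>sq: "integrable \<mu> (\<lambda>x. (norm (\<phi> x))\<^sup>2)"
  shows "integrable M (\<lambda>\<omega>. (norm (\<Sum>i=1..N. \<phi> (X i \<omega>)))\<^sup>2) \<and>
    (\<integral>\<omega>. (norm (\<Sum>i=1..N. \<phi> (X i \<omega>)))\<^sup>2 \<partial>M) = real N * (\<integral>x. (norm (\<phi> x))\<^sup>2 \<partial>\<mu>)"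
proof -
  interpret prob_space M by (rule P)
  let ?s = "\<integral>x. (norm (\<phi> x))\<^sup>2 \<partial>\<mu>"
  have sq: "integrable M (\<lambda>\<omega>. (norm (\<phi> (X i \<omega>)))\<^sup>2) \<and> (\<integral>\<omega>. (norm (\<phi> (X i \<omega>)))\<^sup>2 \<partial>M) = ?s"
    if i: "i \<ge> 1" for i
  proof
    have [measurable]: "X i \<in> measurable M borel" using Xm i .
    show "integrable M (\<lambda>\<omega>. (norm (\<phi> (X i \<omega>)))\<^sup>2)"
      using integrable_distr_eq[of "X i" M borel "\<lambda>x. (norm (\<phi> x))\<^sup>2"] \<phi>sq Xd[OF i] by simp
    show "(\<integral>\<omega>. (norm (\<phi> (X i \<omega>)))\<^sup>2 \<partial>M) = ?s"
      using integral_distr[of "X i" M borel "\<lambda>x. (norm (\<phi> x))\<^sup>2"] Xd[OF i] by simp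
  qed
  have cint: "integrable M (\<lambda>\<omega>. \<phi> (X i \<omega>) \<bullet> \<phi> (X j \<omega>))" if i: "i \<ge> 1" and j: "j \<ge> 1" for i j
  proof (rule Bochner_Integration.integrable_bound[where f="\<lambda>\<omega>. (norm (\<phi> (X i \<omega>)))\<^sup>2 + (norm (\<phi> (X j \<omega>)))\<^sup>2"])
    have [measurable]: "X i \<in> measurable M borel" "X j \<in> measurable M borel" using Xm i j by auto
    show "integrable M (\<lambda>\<omega>. (norm (\<phi> (X i \<omega>)))\<^sup>2 + (norm (\<phi> (X j \<omega>)))\<^sup>2)"
      using sq[OF i] sq[OF j] by auto
    show "(\<lambda>\<omega>. \<phi> (X i \<omega>) \<bullet> \<phi> (X j \<omega>)) \<in> borel_measurable M" by measurable
    show "AE \<omega> in M. norm (\<phi> (X i \<omega>) \<bullet> \<phi> (X j \<omega>)) \<le> norm ((norm (\<phi> (X i \<omega>)))\<^sup>2 + (norm (\<phi> (X j \<omega>)))\<^sup>2)"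
    proof (intro AE_I2)
      fix \<omega>
      let ?a = "norm (\<phi> (X i \<omega>))" and ?b = "norm (\<phi> (X j \<omega>))"
      have "\<bar>\<phi> (X i \<omega>) \<bullet> \<phi> (X j \<omega>)\<bar> \<le> ?a * ?b" by (rule Cauchy_Schwarz_ineq2)
      also have "\<dots> \<le> ?a\<^sup>2 + ?b\<^sup>2"
      proof -
        have "0 \<le> ?a * ?b" by simp
        moreover have "2 * (?a * ?b) \<le> ?a\<^sup>2 + ?b\<^sup>2"
          using power2_diff[of ?a ?b] zero_le_power2[of "?a - ?b"] by linarith
        ultimately show ?thesis by linarith
      qed
      finally show "norm (\<phi> (X i \<omega>) \<bullet> \<phi> (X j \<omega>)) \<le> norm (?a\<^sup>2 + ?b\<^sup>2)" by simp
    qed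
  qed
  have c0: "(\<integral>\<omega>. \<phi> (X i \<omega>) \<bullet> \<phi> (X j \<omega>) \<partial>M) = 0" if i: "i \<ge> 1" and j: "j \<ge> 1" and ij: "i \<noteq> j" for i j
  proof -
    have [measurable]: "X i \<in> measurable M borel" "X j \<in> measurable M borel" using Xm i j by auto
    have "indep_var borel (X i) borel (X j)"
      using indep_pair[OF P ind, of i j] i j ij by simp
    hence D: "distr M (borel \<Otimes>\<^sub>M borel) (\<lambda>\<omega>. (X i \<omega>, X j \<omega>)) = \<mu> \<Otimes>\<^sub>M \<mu>"
      unfolding indep_var_distribution_eq using Xd i j by simp
    have pm: "(\<lambda>\<omega>. (X i \<omega>, X j \<omega>)) \<in> measurable M (borel \<Otimes>\<^sub>M borel)" by measurable
    have fm: "(\<lambda>p. \<phi> (fst p) \<bullet> \<phi> (snd p)) \<in> borel_measurable (borel \<Otimes>\<^sub>M borel)" by measurable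
    have "(\<integral>\<omega>. \<phi> (X i \<omega>) \<bullet> \<phi> (X j \<omega>) \<partial>M) = (\<integral>p. \<phi> (fst p) \<bullet> \<phi> (snd p) \<partial>(\<mu> \<Otimes>\<^sub>M \<mu>))"
      using integral_distr[OF pm fm] D by simp
    moreover have "integrable (\<mu> \<Otimes>\<^sub>M \<mu>) (\<lambda>p. \<phi> (fst p) \<bullet> \<phi> (snd p))"
      using integrable_distr_eq[OF pm fm] D cint[OF i j] by simp
    moreover have "prob_space \<mu>" using Xd[OF i] prob_space_distr[of "X i" borel] by simp
    ultimately show ?thesis
    proof -
      assume e: "(\<integral>\<omega>. \<phi> (X i \<omega>) \<bullet> \<phi> (X j \<omega>) \<partial>M) = (\<integral>p. \<phi> (fst p) \<bullet> \<phi> (snd p) \<partial>(\<mu> \<Otimes>\<^sub>M \<mu>))"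
        and int: "integrable (\<mu> \<Otimes>\<^sub>M \<mu>) (\<lambda>p. \<phi> (fst p) \<bullet> \<phi> (snd p))" and ps: "prob_space \<mu>"
      interpret m: prob_space \<mu> by (rule ps)
      interpret pp: pair_sigma_finite \<mu> \<mu> by unfold_locales
      have "(\<integral>p. \<phi> (fst p) \<bullet> \<phi> (snd p) \<partial>(\<mu> \<Otimes>\<^sub>M \<mu>)) = (\<integral>a. (\<integral>b. \<phi> a \<bullet> \<phi> b \<partial>\<mu>) \<partial>\<mu>)"
        using pp.integral_fst'[OF int] by simp
      also have "\<dots> = 0" using \<phi>int \<phi>0 by simp
      finally show ?thesis using e by simp
    qed
  qed
  have eq: "(norm (\<Sum>i=1..N. \<phi> (X i \<omega>)))\<^sup>2 = (\<Sum>i=1..N. \<Sum>j=1..N. \<phi> (X i \<omega>) \<bullet> \<phi> (X j \<omega>))" for \<omega>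
    by (simp add: power2_norm_eq_inner inner_sum_left inner_sum_right) (rule sum.swap)
  have rowint: "integrable M (\<lambda>\<omega>. \<Sum>j=1..N. \<phi> (X i \<omega>) \<bullet> \<phi> (X j \<omega>))" if i: "i \<in> {1..N}" for i
    by (rule Bochner_Integration.integrable_sum, rule cint) (use i in auto)
  have rowintg: "(\<integral>\<omega>. (\<Sum>j=1..N. \<phi> (X i \<omega>) \<bullet> \<phi> (X j \<omega>)) \<partial>M)
      = (\<Sum>j=1..N. (\<integral>\<omega>. \<phi> (X i \<omega>) \<bullet> \<phi> (X j \<omega>) \<partial>M))" if i: "i \<in> {1..N}" for i
    by (rule Bochner_Integration.integral_sum, rule cint) (use i in auto)
  show ?thesis
  proof
    show "integrable M (\<lambda>\<omega>. (norm (\<Sum>i=1..N. \<phi> (X i \<omega>)))\<^sup>2)"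
      unfolding eq by (rule Bochner_Integration.integrable_sum, rule rowint)
    have "(\<integral>\<omega>. (norm (\<Sum>i=1..N. \<phi> (X i \<omega>)))\<^sup>2 \<partial>M)
        = (\<Sum>i=1..N. (\<integral>\<omega>. (\<Sum>j=1..N. \<phi> (X i \<omega>) \<bullet> \<phi> (X j \<omega>)) \<partial>M))"
      unfolding eq by (rule Bochner_Integration.integral_sum, rule rowint)
    also have "\<dots> = (\<Sum>i=1..N. \<Sum>j=1..N. (\<integral>\<omega>. \<phi> (X i \<omega>) \<bullet> \<phi> (X j \<omega>) \<partial>M))"
      using rowintg by simp
    also have "\<dots> = (\<Sum>i=1..N. \<Sum>j=1..N. (if i = j then ?s else 0))"
    proof (intro sum.cong refl)
      fix i j assume "i \<in> {1..N}" "j \<in> {1..N}"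
      thus "(\<integral>\<omega>. \<phi> (X i \<omega>) \<bullet> \<phi> (X j \<omega>) \<partial>M) = (if i = j then ?s else 0)"
        using c0[of i j] sq[of i] by (auto simp: power2_norm_eq_inner)
    qed
    also have "\<dots> = real N * ?s" by simp
    finally show "(\<integral>\<omega>. (norm (\<Sum>i=1..N. \<phi> (X i \<omega>)))\<^sup>2 \<partial>M) = real N * ?s" .
  qed
qed


theorem theorem3p11:
  fixes B :: "'u::{real_inner, complete_space, second_countable_topology} \<Rightarrow>\<^sub>L 'w::{banach, second_countable_topology}"
    and \<psi> :: "'u \<Rightarrow> ereal"
    and U0 :: "'u set"
    and M :: "'o measure"
    and \<xi> :: "'o \<Rightarrow> 'x::polish_space"
    and \<xi>s :: "nat \<Rightarrow> 'o \<Rightarrow> 'x"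
    and f :: "'w \<Rightarrow> 'x \<Rightarrow> real"
    and \<zeta>f \<zeta>Df :: "'x \<Rightarrow> real"
    and gradg :: "'u \<Rightarrow> 'x \<Rightarrow> 'u"
    and Dwf :: "'w \<Rightarrow> 'x \<Rightarrow> ('w \<Rightarrow>\<^sub>L real)"
    and ustar :: "'u"
    and uN :: "nat \<Rightarrow> 'o \<Rightarrow> 'u"
    and j :: "'u \<Rightarrow>\<^sub>L 'uu::banach"
    and k :: "('uu \<Rightarrow>\<^sub>L real) \<Rightarrow>\<^sub>L 'u"
    and e :: "'h::{real_inner, complete_space, second_countable_topology} \<Rightarrow>\<^sub>L ('uu \<Rightarrow>\<^sub>L real)"
    and hgrad :: "'x \<Rightarrow> 'h"
    and \<theta> \<rho> :: real
    and N :: nat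
  defines "\<mu> \<equiv> distr M borel \<xi>"
  assumes B_compact: "compact_operator B"
    and \<psi>_nonneg: "\<And>u. \<psi> u \<ge> 0"
    and \<psi>_proper: "proper_fun \<psi>" and \<psi>_closed: "closed_fun \<psi>" and \<psi>_convex: "convex_fun \<psi>"
    and \<psi>_dom_bounded: "bounded (edom \<psi>)"
    and U0: "open U0" "convex U0" "bounded U0" "edom \<psi> \<subseteq> U0"
    and M_prob: "prob_space M" and M_complete: "complete_measure M"
    and \<xi>_meas: "\<xi> \<in> measurable M borel"
    and \<xi>s_meas: "\<And>i. i \<ge> 1 \<Longrightarrow> \<xi>s i \<in> measurable M borel"
    and \<xi>s_indep: "prob_space.indep_vars M (\<lambda>_. borel) \<xi>s {1..}"
    and \<xi>s_distr: "\<And>i. i \<ge> 1 \<Longrightarrow> distr M borel (\<xi>s i) = distr M borel \<xi>"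
    and f_cont: "\<And>x. continuous_on (blinfun_apply B ` edom \<psi>) (\<lambda>w. f w x)"
    and f_meas: "\<And>w. w \<in> blinfun_apply B ` U0 \<Longrightarrow> (\<lambda>x. f w x) \<in> borel_measurable borel"
    and f_bound: "\<And>u x. u \<in> U0 \<Longrightarrow> \<bar>f (B u) x\<bar> \<le> \<zeta>f x"
    and \<zeta>f_int: "integrable \<mu> \<zeta>f"
    and g_deriv: "\<And>x u. u \<in> U0 \<Longrightarrow>
        ((\<lambda>v. f (B v) x) has_derivative (\<lambda>v. gradg u x \<bullet> v)) (at u)"
    and g_C1: "\<And>x. continuous_on U0 (\<lambda>u. gradg u x)"
    and Dwf_cont: "\<And>x. continuous_on (blinfun_apply B ` edom \<psi>) (\<lambda>w. Dwf w x)"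
    and Dwf_meas: "\<And>w. w \<in> blinfun_apply B ` edom \<psi> \<Longrightarrow> (\<lambda>x. Dwf w x) \<in> borel_measurable borel"
    and grad_adj: "\<And>u x v. u \<in> edom \<psi> \<Longrightarrow> gradg u x \<bullet> v = Dwf (B u) x (B v)"
    and \<zeta>Df_int: "integrable \<mu> \<zeta>Df"
    and gradg_bound: "\<And>u x. u \<in> U0 \<Longrightarrow> norm (gradg u x) \<le> \<zeta>Df x"
    and Dwf_bound: "\<And>u x. u \<in> edom \<psi> \<Longrightarrow> norm (Dwf (B u) x) \<le> \<zeta>Df x"
    and ustar_min: "\<And>u. ereal (\<integral>x. f (B ustar) x \<partial>\<mu>) + \<psi> ustar \<le> ereal (\<integral>x. f (B u) x \<partial>\<mu>) + \<psi> u"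
    and uN_meas: "\<And>n. n \<ge> 1 \<Longrightarrow> uN n \<in> borel_measurable M"
    and uN_min: "\<And>n \<omega> u. n \<ge> 1 \<Longrightarrow> \<omega> \<in> space M \<Longrightarrow>
        ereal ((1 / real n) * (\<Sum>i=1..n. f (B (uN n \<omega>)) (\<xi>s i \<omega>))) + \<psi> (uN n \<omega>)
          \<le> ereal ((1 / real n) * (\<Sum>i=1..n. f (B u) (\<xi>s i \<omega>))) + \<psi> u"
    and j_inj: "inj (blinfun_apply j)" and k_inj: "inj (blinfun_apply k)" and e_inj: "inj (blinfun_apply e)"
    and duality: "\<And>v u. \<bar>k v \<bullet> u\<bar> \<le> norm v * norm (j u)"
    and \<theta>_pos: "\<theta> > 0" and \<rho>_ge: "\<rho> \<ge> 2"
    and growth: "\<And>u. ereal (\<integral>x. Dwf (B ustar) x (B (u - ustar)) \<partial>\<mu>) + \<psi> u - \<psi> ustar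
                       \<ge> ereal (\<theta> * norm (j (u - ustar)) powr \<rho>)"
    and hgrad_rep: "\<And>x. k (e (hgrad x)) = gradg ustar x"
    and hgrad_int: "integrable \<mu> hgrad"
    and \<sigma>_finite: "integrable \<mu> (\<lambda>x. (norm (hgrad x - (\<integral>y. hgrad y \<partial>\<mu>)))\<^sup>2)"
    and f_convex: "\<And>x. convex_on (blinfun_apply B ` U0) (\<lambda>w. f w x)"
    and N_pos: "N \<ge> 1"
  shows "ennreal (\<theta>\<^sup>2) * (\<integral>\<^sup>+ \<omega>. ennreal (norm (j (uN N \<omega> - ustar)) powr (2 * (\<rho> - 1))) \<partial>M)
           \<le> ennreal ((1 / real N) * (norm e)\<^sup>2 * (\<integral>x. (norm (hgrad x - (\<integral>y. hgrad y \<partial>\<mu>)))\<^sup>2 \<partial>\<mu>))"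
  proof -
  interpret P: prob_space M by (rule M_prob)
  have mu_prob: "prob_space \<mu>" unfolding \<mu>_def by (rule P.prob_space_distr[OF \<xi>_meas])
  interpret m: prob_space \<mu> by (rule mu_prob)
  have sets_mu: "sets \<mu> = sets borel" unfolding \<mu>_def by simp
  have hgrad_meas[measurable]: "hgrad \<in> borel_measurable borel"
    using borel_measurable_integrable[OF hgrad_int] unfolding measurable_cong_sets[OF sets_mu refl] .
  define m where "m = (\<integral>y. hgrad y \<partial>\<mu>)"
  define \<phi> where "\<phi> = (\<lambda>x. hgrad x - m)"
  define \<sigma>2 where "\<sigma>2 = (\<integral>x. (norm (hgrad x - (\<integral>y. hgrad y \<partial>\<mu>)))\<^sup>2 \<partial>\<mu>)"
  define S where "S = (\<lambda>\<omega>. \<Sum>i=1..N. \<phi> (\<xi>s i \<omega>))"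
  have \<phi>_meas[measurable]: "\<phi> \<in> borel_measurable borel" unfolding \<phi>_def by measurable
  have \<phi>_int: "integrable \<mu> \<phi>" unfolding \<phi>_def using hgrad_int by auto
  have \<phi>_0: "integral\<^sup>L \<mu> \<phi> = 0" unfolding \<phi>_def m_def
  proof -
    have "(\<integral>x. hgrad x - (\<integral>y. hgrad y \<partial>\<mu>) \<partial>\<mu>) = (\<integral>x. hgrad x \<partial>\<mu>) - (\<integral>x. (\<integral>y. hgrad y \<partial>\<mu>) \<partial>\<mu>)"
      using hgrad_int by (intro Bochner_Integration.integral_diff) auto
    also have "(\<integral>x. (\<integral>y. hgrad y \<partial>\<mu>) \<partial>\<mu>) = (\<integral>y. hgrad y \<partial>\<mu>)"
    proof -
      have "(\<integral>x. (\<integral>y. hgrad y \<partial>\<mu>) \<partial>\<mu>) = (\<integral>x. 1 *\<^sub>R (\<integral>y. hgrad y \<partial>\<mu>) \<partial>\<mu>)" by simp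
      also have "\<dots> = (\<integral>x. (1::real) \<partial>\<mu>) *\<^sub>R (\<integral>y. hgrad y \<partial>\<mu>)"
        by (rule integral_scaleR_left) simp
      finally show ?thesis by (simp add: m.prob_space)
    qed
    finally show "(\<integral>x. hgrad x - (\<integral>y. hgrad y \<partial>\<mu>) \<partial>\<mu>) = 0" by simp
  qed
  have VM: "integrable M (\<lambda>\<omega>. (norm (S \<omega>))\<^sup>2) \<and> (\<integral>\<omega>. (norm (S \<omega>))\<^sup>2 \<partial>M) = real N * \<sigma>2"
    unfolding S_def \<sigma>2_def
    using var_mean[OF M_prob \<xi>s_meas \<xi>s_indep _ \<phi>_meas \<phi>_int \<phi>_0, of N] \<xi>s_distr \<sigma>_finite
    unfolding \<phi>_def m_def \<mu>_def by simp
  have \<sigma>2_nonneg: "\<sigma>2 \<ge> 0" unfolding \<sigma>2_def by simp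
  obtain u0 where u0: "\<psi> u0 < \<infinity>" using \<psi>_proper unfolding proper_fun_def by auto
  have \<psi>_fin: "\<psi> ustar < \<infinity>"
  proof (rule ccontr)
    assume "\<not> \<psi> ustar < \<infinity>"
    hence "\<psi> ustar = \<infinity>" by simp
    thus False using ustar_min[of u0] u0 by auto
  qed
  obtain q where q: "\<psi> ustar = ereal q" using \<psi>_fin \<psi>_nonneg[of ustar] by (cases "\<psi> ustar") auto
  have ustar_dom: "ustar \<in> edom \<psi>" using \<psi>_fin unfolding edom_def by simp
  hence ustar_U0: "ustar \<in> U0" using U0(4) by auto
  define KE where "KE = (\<lambda>h. k (e h))"
  have KE_lin: "bounded_linear KE" unfolding KE_def
    by (rule bounded_linear_compose[OF blinfun.bounded_linear_right blinfun.bounded_linear_right])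
  have Nr: "real N \<ge> 1" using N_pos by simp
  have EG: "(\<integral>x. Dwf (B ustar) x (B v) \<partial>\<mu>) = KE m \<bullet> v" for v
  proof -
    have "(\<integral>x. Dwf (B ustar) x (B v) \<partial>\<mu>) = (\<integral>x. KE (hgrad x) \<bullet> v \<partial>\<mu>)"
      using grad_adj[OF ustar_dom] hgrad_rep unfolding KE_def by simp
    also have "\<dots> = (\<integral>x. KE (hgrad x) \<partial>\<mu>) \<bullet> v"
      using integrable_bounded_linear[OF KE_lin hgrad_int] by simp
    also have "(\<integral>x. KE (hgrad x) \<partial>\<mu>) = KE m"
      unfolding m_def by (rule integral_bounded_linear[OF KE_lin hgrad_int])
    finally show ?thesis .
  qed
  have pw: "\<theta>\<^sup>2 * norm (j (uN N \<omega> - ustar)) powr (2 * (\<rho> - 1)) \<le> (norm e / real N)\<^sup>2 * (norm (S \<omega>))\<^sup>2"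
    if \<omega>: "\<omega> \<in> space M" for \<omega>
  proof -
    define w where "w = uN N \<omega>"
    define d where "d = w - ustar"
    have minw: "ereal ((1 / real N) * (\<Sum>i=1..N. f (B w) (\<xi>s i \<omega>))) + \<psi> w
          \<le> ereal ((1 / real N) * (\<Sum>i=1..N. f (B ustar) (\<xi>s i \<omega>))) + ereal q"
      using uN_min[OF N_pos \<omega>, of ustar] q unfolding w_def by simp
    have "\<psi> w < \<infinity>"
    proof (rule ccontr)
      assume "\<not> \<psi> w < \<infinity>" hence "\<psi> w = \<infinity>" by simp
      thus False using minw by simp
    qed
    then obtain p where p: "\<psi> w = ereal p" using \<psi>_nonneg[of w] by (cases "\<psi> w") auto
    have w_U0: "w \<in> U0" using \<open>\<psi> w < \<infinity>\<close> U0(4) unfolding edom_def by auto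
    have min_r: "(1 / real N) * (\<Sum>i=1..N. f (B w) (\<xi>s i \<omega>)) + p
          \<le> (1 / real N) * (\<Sum>i=1..N. f (B ustar) (\<xi>s i \<omega>)) + q"
      using minw p by simp
    have gi: "gradg ustar x \<bullet> d \<le> f (B w) x - f (B ustar) x" for x
      unfolding d_def
    proof (rule grad_ineq[where g = "\<lambda>v. f (B v) x"])
      fix t :: real assume t: "0 < t" "t < 1"
      have eq: "B (ustar + t *\<^sub>R (w - ustar)) = (1 - t) *\<^sub>R B ustar + t *\<^sub>R B w"
        by (simp add: blinfun.diff_right blinfun.add_right blinfun.scaleR_right algebra_simps)
      show "f (B (ustar + t *\<^sub>R (w - ustar))) x \<le> (1 - t) * f (B ustar) x + t * f (B w) x"
        unfolding eq using convex_onD[OF f_convex[of x], of t "B ustar" "B w"] t ustar_U0 w_U0 by auto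
    next
      show "((\<lambda>v. f (B v) x) has_derivative (\<lambda>v. gradg ustar x \<bullet> v)) (at ustar)"
        by (rule g_deriv[OF ustar_U0])
    qed
    have sum_gi: "(\<Sum>i=1..N. KE (hgrad (\<xi>s i \<omega>)) \<bullet> d)
        \<le> (\<Sum>i=1..N. f (B w) (\<xi>s i \<omega>)) - (\<Sum>i=1..N. f (B ustar) (\<xi>s i \<omega>))"
      unfolding sum_subtractf[symmetric] KE_def hgrad_rep by (rule sum_mono) (rule gi)
    have gr: "\<theta> * norm (j d) powr \<rho> \<le> KE m \<bullet> d + p - q"
      using growth[of w] EG[of d] p q unfolding d_def by simp
    have KS: "KE (S \<omega>) = (\<Sum>i=1..N. KE (hgrad (\<xi>s i \<omega>))) - real N *\<^sub>R KE m"
      unfolding S_def \<phi>_def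
      by (simp add: sum_subtractf linear_sum[OF bounded_linear.linear[OF KE_lin]]
          linear_diff[OF bounded_linear.linear[OF KE_lin]] sum_constant_scaleR
          linear_scale[OF bounded_linear.linear[OF KE_lin]])
    have KSd: "KE (S \<omega>) \<bullet> d = (\<Sum>i=1..N. KE (hgrad (\<xi>s i \<omega>)) \<bullet> d) - real N * (KE m \<bullet> d)"
      unfolding KS by (simp add: inner_diff_left inner_sum_left)
    have main: "\<theta> * norm (j d) powr \<rho> \<le> - (KE (S \<omega>) \<bullet> d) / real N"
    proof -
      have "(\<Sum>i=1..N. KE (hgrad (\<xi>s i \<omega>)) \<bullet> d) \<le> real N * (q - p)"
      proof -
        let ?a = "\<Sum>i=1..N. f (B w) (\<xi>s i \<omega>)" and ?b = "\<Sum>i=1..N. f (B ustar) (\<xi>s i \<omega>)"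
        have "real N * ((1 / real N) * ?a + p) \<le> real N * ((1 / real N) * ?b + q)"
          by (rule mult_left_mono[OF min_r]) simp
        hence "?a + real N * p \<le> ?b + real N * q" using Nr by (simp add: distrib_left)
        thus ?thesis using sum_gi by (simp add: right_diff_distrib)
      qed
      hence "KE (S \<omega>) \<bullet> d \<le> real N * (q - p) - real N * (KE m \<bullet> d)" unfolding KSd by simp
      hence "- (KE (S \<omega>) \<bullet> d) / real N \<ge> KE m \<bullet> d + p - q"
        using Nr by (simp add: field_simps)
      thus ?thesis using gr by linarith
    qed
    have CS: "- (KE (S \<omega>) \<bullet> d) \<le> norm e * norm (S \<omega>) * norm (j d)"
    proof -
      have "- (KE (S \<omega>) \<bullet> d) \<le> \<bar>k (e (S \<omega>)) \<bullet> d\<bar>" unfolding KE_def by simp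
      also have "\<dots> \<le> norm (e (S \<omega>)) * norm (j d)" by (rule duality)
      also have "\<dots> \<le> norm e * norm (S \<omega>) * norm (j d)"
        by (rule mult_right_mono[OF norm_blinfun norm_ge_zero])
      finally show ?thesis .
    qed
    define r where "r = norm (j d)"
    define A where "A = norm e * norm (S \<omega>) / real N"
    have A_nonneg: "A \<ge> 0" unfolding A_def by simp
    have key: "\<theta> * r powr \<rho> \<le> A * r"
    proof -
      have "- (KE (S \<omega>) \<bullet> d) / real N \<le> norm e * norm (S \<omega>) * norm (j d) / real N"
        using divide_right_mono[OF CS, of "real N"] by simp
      thus ?thesis using main unfolding A_def r_def by (simp add: field_simps)
    qed
    have "\<theta>\<^sup>2 * r powr (2 * (\<rho> - 1)) \<le> A\<^sup>2"
    proof (cases "r = 0")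
      case True thus ?thesis by simp
    next
      case False
      hence rpos: "r > 0" unfolding r_def by simp
      have "r powr \<rho> = r powr (\<rho> - 1) * r" using rpos by (simp add: powr_diff)
      hence "\<theta> * r powr (\<rho> - 1) * r \<le> A * r" using key by (simp add: mult.assoc)
      hence le: "\<theta> * r powr (\<rho> - 1) \<le> A" using rpos by simp
      have nn: "0 \<le> \<theta> * r powr (\<rho> - 1)" using \<theta>_pos by simp
      have "(\<theta> * r powr (\<rho> - 1))\<^sup>2 \<le> A\<^sup>2" by (rule power_mono[OF le nn])
      moreover have "(\<theta> * r powr (\<rho> - 1))\<^sup>2 = \<theta>\<^sup>2 * r powr (2 * (\<rho> - 1))"
      proof -
        have "(r powr (\<rho> - 1))\<^sup>2 = r powr (\<rho> - 1) * r powr (\<rho> - 1)" by (rule power2_eq_square)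
        also have "\<dots> = r powr ((\<rho> - 1) + (\<rho> - 1))" by (rule powr_add[symmetric])
        also have "(\<rho> - 1) + (\<rho> - 1) = 2 * (\<rho> - 1)" by simp
        finally have "(r powr (\<rho> - 1))\<^sup>2 = r powr (2 * (\<rho> - 1))" .
        thus ?thesis by (simp only: power_mult_distrib)
      qed
      ultimately show ?thesis by simp
    qed
    thus ?thesis unfolding A_def r_def d_def w_def by (simp add: power_divide power_mult_distrib)
  qed
  define c where "c = (norm e / real N)\<^sup>2 / \<theta>\<^sup>2"
  have c_nonneg: "c \<ge> 0" unfolding c_def by simp
  have S_meas: "(\<lambda>\<omega>. (norm (S \<omega>))\<^sup>2) \<in> borel_measurable M"
    using borel_measurable_integrable[OF conjunct1[OF VM]] .
  have "(\<integral>\<^sup>+ \<omega>. ennreal (norm (j (uN N \<omega> - ustar)) powr (2 * (\<rho> - 1))) \<partial>M)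
      \<le> (\<integral>\<^sup>+ \<omega>. ennreal (c * (norm (S \<omega>))\<^sup>2) \<partial>M)"
  proof (rule nn_integral_mono)
    fix \<omega> assume "\<omega> \<in> space M"
    have t2: "\<theta>\<^sup>2 > 0" using \<theta>_pos by simp
    have "norm (j (uN N \<omega> - ustar)) powr (2 * (\<rho> - 1)) \<le> ((norm e / real N)\<^sup>2 * (norm (S \<omega>))\<^sup>2) / \<theta>\<^sup>2"
      using pw[OF \<open>\<omega> \<in> space M\<close>] t2 by (subst pos_le_divide_eq) (simp_all add: mult.commute)
    also have "\<dots> = c * (norm (S \<omega>))\<^sup>2" unfolding c_def by simp
    finally have "norm (j (uN N \<omega> - ustar)) powr (2 * (\<rho> - 1)) \<le> c * (norm (S \<omega>))\<^sup>2" .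
    thus "ennreal (norm (j (uN N \<omega> - ustar)) powr (2 * (\<rho> - 1))) \<le> ennreal (c * (norm (S \<omega>))\<^sup>2)"
      by (rule ennreal_leI)
  qed
  also have "\<dots> = ennreal c * (\<integral>\<^sup>+ \<omega>. ennreal ((norm (S \<omega>))\<^sup>2) \<partial>M)"
    using c_nonneg S_meas by (simp add: ennreal_mult nn_integral_cmult)
  also have "(\<integral>\<^sup>+ \<omega>. ennreal ((norm (S \<omega>))\<^sup>2) \<partial>M) = ennreal (real N * \<sigma>2)"
    using nn_integral_eq_integral[OF conjunct1[OF VM]] VM by simp
  finally have I: "(\<integral>\<^sup>+ \<omega>. ennreal (norm (j (uN N \<omega> - ustar)) powr (2 * (\<rho> - 1))) \<partial>M)
      \<le> ennreal c * ennreal (real N * \<sigma>2)" .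
  have "ennreal (\<theta>\<^sup>2) * (\<integral>\<^sup>+ \<omega>. ennreal (norm (j (uN N \<omega> - ustar)) powr (2 * (\<rho> - 1))) \<partial>M)
      \<le> ennreal (\<theta>\<^sup>2) * (ennreal c * ennreal (real N * \<sigma>2))"
    by (rule mult_left_mono[OF I]) simp
  also have "\<dots> = ennreal (\<theta>\<^sup>2 * c * (real N * \<sigma>2))"
    using c_nonneg \<sigma>2_nonneg by (simp add: ennreal_mult mult.assoc)
  also have "\<theta>\<^sup>2 * c * (real N * \<sigma>2) = (1 / real N) * (norm e)\<^sup>2 * \<sigma>2"
    unfolding c_def using \<theta>_pos Nr by (simp add: field_simps power2_eq_square)
  finally show ?thesis unfolding \<sigma>2_def .
qed

end
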